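(* There are opinion poll instances on $2(n+1)$ agents on which the AVD mechanism, for every choice of default node, has expected additive approximation $\Omega(\sqrt{n\ln n})$.
   Context: A nomination profile on a finite agent set $N$ is a directed graph $\mathbf{x}$ on $N$ without self-loops. For $S\subseteq N$, $d_j(S,\mathbf{x})=|\{i\in S:(i,j)\text{ is an edge}\}|$; $d_j(\mathbf{x})=d_j(N\setminus\{j\},\mathbf{x})$ and $\Delta(\mathbf{x})=\max_j d_j(\mathbf{x})$. Opinion poll model: the random profile is drawn from a product distribution $\prod_{i\in N}\mathbf{P}_i$, where $\mathbf{P}_i$ is an arbitrary distribution over sets of outgoing edges of $i$ (to nodes other than $i$), independent across agents $i$. AVD with default node $t$: a non-default node $k$ beats a non-default node $j$ if $d_k(N\setminus\{j,k,t\},\mathbf{x})>d_j(N\setminus\{j,k,t\},\mathbf{x})$; a non-default $k$ beats $t$ if $d_k(N\setminus\{k,t\},\mathbf{x})>d_t(N\setminus\{k,t\},\mathbf{x})$, and $t$ beats $k$ if $d_k(N\setminus\{k,t\},\mathbf{x})<d_t(N\setminus\{k,t\},\mathbf{x})$. AVD returns the node that beats every other node if it exists, otherwise $t$. The expected additive approximation is $\mathbb{E}[\Delta(\mathbf{x})-d_w(\mathbf{x})]$ where $w$ is the winner. *)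

theory Defs
  imports "HOL-Probability.Probability"
begin

text \<open>A nomination profile on agent set N is represented by x :: nat => nat set,
  where x i is the set of out-neighbours of agent i.\<close>

definition valid_profile :: "nat set \<Rightarrow> (nat \<Rightarrow> nat set) \<Rightarrow> bool" where
  "valid_profile N x \<longleftrightarrow> (\<forall>i\<in>N. x i \<subseteq> N - {i})"

definition indeg :: "nat set \<Rightarrow> (nat \<Rightarrow> nat set) \<Rightarrow> nat \<Rightarrow> nat" where
  "indeg S x j = card {i \<in> S. j \<in> x i}"

definition deg :: "nat set \<Rightarrow> (nat \<Rightarrow> nat set) \<Rightarrow> nat \<Rightarrow> nat" where
  "deg N x j = indeg (N - {j}) x j"

definition maxdeg :: "nat set \<Rightarrow> (nat \<Rightarrow> nat set) \<Rightarrow> nat" where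
  "maxdeg N x = Max ((deg N x) ` N)"

definition avd_beats :: "nat set \<Rightarrow> nat \<Rightarrow> (nat \<Rightarrow> nat set) \<Rightarrow> nat \<Rightarrow> nat \<Rightarrow> bool" where
  "avd_beats N t x a b =
     (if a \<noteq> t \<and> b \<noteq> t then indeg (N - {a, b, t}) x a > indeg (N - {a, b, t}) x b
      else if b = t then indeg (N - {a, t}) x a > indeg (N - {a, t}) x t
      else indeg (N - {b, t}) x b < indeg (N - {b, t}) x t)"

definition avd :: "nat set \<Rightarrow> nat \<Rightarrow> (nat \<Rightarrow> nat set) \<Rightarrow> nat" where
  "avd N t x =
     (if \<exists>k\<in>N. \<forall>j\<in>N - {k}. avd_beats N t x k j
      then (THE k. k \<in> N \<and> (\<forall>j\<in>N - {k}. avd_beats N t x k j))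
      else t)"

definition opinion_poll :: "nat set \<Rightarrow> (nat \<Rightarrow> nat set pmf) \<Rightarrow> bool" where
  "opinion_poll N P \<longleftrightarrow> (\<forall>i\<in>N. set_pmf (P i) \<subseteq> Pow (N - {i}))"

definition profile_pmf :: "nat set \<Rightarrow> (nat \<Rightarrow> nat set pmf) \<Rightarrow> (nat \<Rightarrow> nat set) pmf" where
  "profile_pmf N P = Pi_pmf N {} P"

definition avd_additive_approx :: "nat set \<Rightarrow> nat \<Rightarrow> (nat \<Rightarrow> nat set pmf) \<Rightarrow> real" where
  "avd_additive_approx N t P =
     measure_pmf.expectation (profile_pmf N P)
       (\<lambda>x. real (maxdeg N x) - real (deg N x (avd N t x)))"

end

theory Submission
  imports Defs
begin



lemma bin_step:
  fixes g :: "nat \<Rightarrow> real"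
  shows "measure_pmf.expectation (binomial_pmf (Suc K) (1/2)) g =
     (measure_pmf.expectation (binomial_pmf K (1/2)) (\<lambda>k. g (Suc k)) +
      measure_pmf.expectation (binomial_pmf K (1/2)) g) / 2"
proof -
  have "binomial_pmf (Suc K) (1/2) = bind_pmf (bernoulli_pmf (1/2))
          (\<lambda>b. map_pmf (\<lambda>k. (if b then 1 else 0) + k) (binomial_pmf K (1/2)))"
    by (subst binomial_pmf_Suc) (auto simp: map_pmf_def)
  also have "measure_pmf.expectation \<dots> g = (\<Sum>b\<in>UNIV. pmf (bernoulli_pmf (1/2)) b *\<^sub>R
      measure_pmf.expectation (map_pmf (\<lambda>k. (if b then 1 else 0) + k) (binomial_pmf K (1/2))) g)"
    by (rule pmf_expectation_bind) auto
  also have "\<dots> = (measure_pmf.expectation (binomial_pmf K (1/2)) (\<lambda>k. g (Suc k)) +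
      measure_pmf.expectation (binomial_pmf K (1/2)) g) / 2"
    by (simp add: UNIV_bool)
  finally show ?thesis .
qed

definition DD :: "nat \<Rightarrow> real" where
  "DD K = measure_pmf.expectation (binomial_pmf K (1/2)) (\<lambda>k. \<bar>2 * real k - real K\<bar>)"

definition SS :: "nat \<Rightarrow> real" where
  "SS K = measure_pmf.expectation (binomial_pmf K (1/2)) (\<lambda>k. 2 * real k - real K)"

lemma SS_zero: "SS K = 0"
proof (induction K)
  case 0 thus ?case by (simp add: SS_def binomial_pmf_0)
next
  case (Suc K)
  have "SS (Suc K) = (measure_pmf.expectation (binomial_pmf K (1/2)) (\<lambda>k. (2 * real k - real K) + 1) +
      measure_pmf.expectation (binomial_pmf K (1/2)) (\<lambda>k. (2 * real k - real K) - 1)) / 2"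
    unfolding SS_def by (subst bin_step) (simp add: algebra_simps)
  also have "\<dots> = SS K"
    unfolding SS_def by (subst Bochner_Integration.integral_add, simp, simp)
       (subst Bochner_Integration.integral_diff, simp, simp, simp)
  finally show ?case using Suc by simp
qed

lemma abs_step: "(\<bar>y + 1\<bar> + \<bar>y - 1\<bar>) / 2 = \<bar>y\<bar> + (if y = 0 then 1 else 0)"
  if "y \<in> \<int>" for y :: real
proof -
  from that obtain z where z: "y = of_int z" by (auto elim: Ints_cases)
  show ?thesis by (cases "z = 0"; cases "z > 0") (auto simp: z)
qed

lemma DD_step: "DD (Suc K) = DD K +
   measure_pmf.expectation (binomial_pmf K (1/2)) (\<lambda>k. if 2 * real k - real K = 0 then 1 else 0)"
proof -
  have "DD (Suc K) = measure_pmf.expectation (binomial_pmf K (1/2))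
      (\<lambda>k. (\<bar>(2 * real k - real K) + 1\<bar> + \<bar>(2 * real k - real K) - 1\<bar>) / 2)"
    unfolding DD_def by (subst bin_step) (simp add: algebra_simps)
  also have "\<dots> = measure_pmf.expectation (binomial_pmf K (1/2))
      (\<lambda>k. \<bar>2 * real k - real K\<bar> + (if 2 * real k - real K = 0 then 1 else 0))"
    by (subst abs_step) auto
  also have "\<dots> = DD K +
   measure_pmf.expectation (binomial_pmf K (1/2)) (\<lambda>k. if 2 * real k - real K = 0 then 1 else 0)"
    unfolding DD_def by (subst Bochner_Integration.integral_add) auto
  finally show ?thesis .
qed

definition pp :: "nat \<Rightarrow> real" where
  "pp L = pmf (binomial_pmf (2*L) (1/2)) L"

lemma DD_mono: "DD K \<le> DD (Suc K)"
  by (subst DD_step) (auto intro!: Bochner_Integration.integral_nonneg)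

lemma DD_even: "DD (Suc (2*L)) = DD (2*L) + pp L"
proof -
  have "measure_pmf.expectation (binomial_pmf (2*L) (1/2))
       (\<lambda>k. if 2 * real k - real (2*L) = 0 then 1 else 0) =
      measure_pmf.expectation (binomial_pmf (2*L) (1/2)) (\<lambda>k. if k = L then 1 else 0)"
    by (rule Bochner_Integration.integral_cong) auto
  also have "\<dots> = pp L"
    unfolding pp_def by (subst integral_measure_pmf[of "{L}"]) (auto split: if_splits)
  finally show ?thesis by (simp add: DD_step)
qed

lemma DD_sum: "DD (2*M) \<ge> (\<Sum>L<M. pp L)"
proof (induction M)
  case 0 show ?case by (simp add: DD_def binomial_pmf_0)
next
  case (Suc M)
  have "DD (2 * Suc M) = DD (Suc (Suc (2*M)))" by simp
  also have "\<dots> \<ge> DD (Suc (2*M))" by (rule DD_mono)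
  finally show ?case using Suc DD_even[of M] by simp
qed

lemma ratio_aux: "x \<ge> 0 \<Longrightarrow> (2*x+2)*(2*x+1)/((x+1)*(x+1)*4) = (2*x+1)/(2*x+2::real)"
proof -
  assume x: "x \<ge> 0"
  have "(x+1)*(x+1)*4 > 0" using x by (intro mult_pos_pos) auto
  moreover have "2*x+2 > 0" using x by auto
  ultimately show ?thesis by (subst frac_eq_eq) (auto simp: algebra_simps)
qed
lemma sq_aux: "(b::real) > 0 \<Longrightarrow> d > 0 \<Longrightarrow> (p*a/b)^2 * e = (p^2*d) * (a^2 * e/(b^2 * d))"
  by (simp add: field_simps power2_eq_square)

lemma pp_Suc: "pp (Suc L) = pp L * (2*L+1) / (2*L+2)"
proof -
  have e1: "Suc (Suc (2*L)) * (Suc (2*L) choose L) = (Suc (Suc (2*L)) choose Suc L) * Suc L"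
    by (rule Suc_times_binomial_eq)
  have e2: "Suc (2*L) * (2*L choose L) = (Suc (2*L) choose Suc L) * Suc L"
    by (rule Suc_times_binomial_eq)
  have e3: "(Suc (2*L) choose Suc L) = (Suc (2*L) choose L)"
    using binomial_symmetric[of "Suc L" "Suc (2*L)"] by simp
  have e4: "(Suc (Suc (2*L)) choose Suc L) * (Suc L * Suc L) = Suc (Suc (2*L)) * Suc (2*L) * (2*L choose L)"
    using e1 e2 e3 by (metis mult.assoc mult.commute)
  hence e5: "real (Suc (Suc (2*L)) choose Suc L) * (real (Suc L) * real (Suc L)) =
      real (Suc (Suc (2*L))) * real (Suc (2*L)) * real (2*L choose L)"
    by (metis of_nat_mult)
  have aux1: "\<And>(cc::real) ss xx yy aa. cc * (ss * ss) = xx * yy * aa \<Longrightarrow> ss > 0 \<Longrightarrow> cc = aa * xx * yy / (ss * ss)"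
    by (simp add: field_simps)
  have e6': "real (Suc (Suc (2*L)) choose Suc L) = real (2*L choose L) * real (Suc (Suc (2*L))) * real (Suc (2*L)) / (real (Suc L) * real (Suc L))"
    by (rule aux1[OF e5]) simp
  have e6: "real (Suc (Suc (2*L)) choose Suc L) = real (2*L choose L) * (2*real L+2) * (2*real L+1) / ((real L+1)*(real L+1))"
    by (subst e6') (simp only: of_nat_Suc of_nat_mult of_nat_numeral, simp add: algebra_simps)
  have "2 * Suc L = Suc (Suc (2*L))" by simp
  hence "pp (Suc L) = real (Suc (Suc (2*L)) choose Suc L) * (1/2)^(2*L+2)"
    unfolding pp_def by (simp add: power_add[symmetric] mult_2 del: binomial_Suc_Suc)
  also have "\<dots> = real (2*L choose L) * (1/2)^(2*L) * ((2*real L+2) * (2*real L+1) / ((real L+1)*(real L+1) * 4))"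
    by (subst e6) (simp add: power_add field_simps del: binomial_Suc_Suc)
  also have "real (2*L choose L) * (1/2)^(2*L) = pp L"
    unfolding pp_def by (simp add: power_add[symmetric] mult_2)
  finally have "pp (Suc L) = pp L * ((2*real L+2) * (2*real L+1) / ((real L+1)*(real L+1) * 4))" .
  moreover have "(2*real L+2) * (2*real L+1) / ((real L+1)*(real L+1) * 4) = (2*real L+1) / (2*real L+2)"
    by (rule ratio_aux) simp
  ultimately have "pp (Suc L) = pp L * ((2*real L+1) / (2*real L+2))" by simp
  thus ?thesis by (simp add: add.commute)
qed

lemma pp_nonneg: "pp L \<ge> 0"
  unfolding pp_def by simp

lemma pp_lower: "pp L ^ 2 * (4 * L + 1) \<ge> 1"
proof (induction L)
  case 0 show ?case by (simp add: pp_def)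
next
  case (Suc L)
  define F :: real where "F = (2*real L+1)^2 * (4*real L+5) / ((2*real L+2)^2 * (4*real L+1))"
  have F0: "(2*real L+2)^2 * (4*real L+1) \<le> ((2*real L+1)^2 * (4*real L+5))"
    by (simp add: power2_eq_square algebra_simps)
  have pos: "(0::real) < (2*real L+2)^2 * (4*real L+1)" by (intro mult_pos_pos) auto
  have F1: "F \<ge> 1" unfolding F_def
    using le_divide_eq_1_pos[OF pos] F0 by blast
  have "pp (Suc L) ^ 2 * (4 * Suc L + 1) = (pp L * (2*real L+1) / (2*real L+2)) ^ 2 * (4*real L+5)"
    unfolding pp_Suc by (simp add: algebra_simps)
  also have "\<dots> = (pp L ^ 2 * (4*real L+1)) * F"
    unfolding F_def by (rule sq_aux) auto
  also have "\<dots> \<ge> 1 * 1" using Suc F1 by (intro mult_mono) (auto simp: add.commute)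
  finally show ?case by simp
qed




definition bitf :: "nat \<Rightarrow> nat \<Rightarrow> bool" where "bitf q j = odd (q div 2^j)"

definition vote :: "nat \<Rightarrow> nat \<Rightarrow> nat \<Rightarrow> nat \<Rightarrow> bool \<Rightarrow> nat set" where
  "vote n m K i b = (if i < m*K then {a \<in> {0..<2*(n+1)}. a mod (n+1) < 2^m \<and> bitf (a mod (n+1)) (i div K) = b} - {i} else {})"

definition prof :: "nat \<Rightarrow> nat \<Rightarrow> nat \<Rightarrow> (nat \<Rightarrow> bool) \<Rightarrow> nat \<Rightarrow> nat set" where
  "prof n m K r = (\<lambda>i. if i \<in> {0..<2*(n+1)} then vote n m K i (r i) else {})"

lemma mem_prof: "a \<in> prof n m K r i \<longleftrightarrow> i < 2*(n+1) \<and> i < m*K \<and> a < 2*(n+1) \<and> a \<noteq> i \<and>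
    a mod (n+1) < 2^m \<and> bitf (a mod (n+1)) (i div K) = r i"
  unfolding prof_def vote_def by auto

lemma twin:
  assumes "k \<in> {0..<2*(n+1)}"
  shows "\<exists>k'\<in>{0..<2*(n+1)}. k' \<noteq> k \<and> (\<forall>i. i \<noteq> k \<longrightarrow> i \<noteq> k' \<longrightarrow>
      (k \<in> prof n m K r i \<longleftrightarrow> k' \<in> prof n m K r i))"
proof -
  define k' where "k' = (if k \<le> n then k + (n+1) else k - (n+1))"
  have k'N: "k' \<in> {0..<2*(n+1)}" using assms unfolding k'_def by auto
  have ne: "k' \<noteq> k" unfolding k'_def by auto
  have md: "k' mod (n+1) = k mod (n+1)"
    unfolding k'_def using assms by (auto simp: le_mod_geq)
  show ?thesis
    using k'N ne md assms by (intro bexI[of _ k']) (auto simp: mem_prof)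
qed

lemma indeg_twin:
  assumes "\<forall>i. i \<noteq> k \<longrightarrow> i \<noteq> k' \<longrightarrow> (k \<in> x i \<longleftrightarrow> k' \<in> x i)" "k \<notin> S" "k' \<notin> S"
  shows "indeg S x k = indeg S x k'"
proof -
  have "{i \<in> S. k \<in> x i} = {i \<in> S. k' \<in> x i}"
  proof (rule Collect_cong)
    fix i show "(i \<in> S \<and> k \<in> x i) = (i \<in> S \<and> k' \<in> x i)"
      using assms(1)[rule_format, of i] assms(2,3) by auto
  qed
  thus ?thesis unfolding indeg_def by simp
qed


lemma nb_lem:
  fixes x :: "nat \<Rightarrow> nat set"
  assumes tw: "\<forall>i. i \<noteq> k \<longrightarrow> i \<noteq> k' \<longrightarrow> (k \<in> x i \<longleftrightarrow> k' \<in> x i)"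
     and ne: "k' \<noteq> k"
  shows "\<not> avd_beats N t x k k'"
proof -
  have e1: "indeg S x k = indeg S x k'" if "k \<notin> S" "k' \<notin> S" for S
    using indeg_twin[OF tw that] .
  show ?thesis
  proof (cases "k \<noteq> t \<and> k' \<noteq> t")
    case True
    have "indeg (N - {k, k', t}) x k = indeg (N - {k, k', t}) x k'" by (rule e1) auto
    thus ?thesis unfolding avd_beats_def using True by simp
  next
    case False
    show ?thesis
    proof (cases "k' = t")
      case True
      have "indeg (N - {k, t}) x k = indeg (N - {k, t}) x k'" by (rule e1) (use True in auto)
      thus ?thesis unfolding avd_beats_def using True ne by simp
    next
      case False2: False
      hence kt: "k = t" using False by simp
      have "indeg (N - {k', t}) x k = indeg (N - {k', t}) x k'" by (rule e1) (use kt in auto)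
      thus ?thesis unfolding avd_beats_def using kt False2 ne by simp
    qed
  qed
qed

lemma avd_prof:
  assumes t: "t \<in> {0..<2*(n+1)}"
  shows "avd {0..<2*(n+1)} t (prof n m K r) = t"
proof -
  let ?N = "{0..<2*(n+1)}"
  let ?x = "prof n m K r"
  have "\<not> (\<exists>k\<in>?N. \<forall>j\<in>?N - {k}. avd_beats ?N t ?x k j)"
  proof
    assume "\<exists>k\<in>?N. \<forall>j\<in>?N - {k}. avd_beats ?N t ?x k j"
    then obtain k where k: "k \<in> ?N" and kb: "\<forall>j\<in>?N - {k}. avd_beats ?N t ?x k j" by (rule bexE)
    from twin[OF k, of m K r] obtain k' where k': "k' \<in> ?N" "k' \<noteq> k"
      and tw: "\<forall>i. i \<noteq> k \<longrightarrow> i \<noteq> k' \<longrightarrow> (k \<in> ?x i \<longleftrightarrow> k' \<in> ?x i)"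
      by (elim bexE conjE)
    have "k' \<in> ?N - {k}" using k' by simp
    with kb have "avd_beats ?N t ?x k k'" by (rule bspec)
    thus False using nb_lem[OF tw k'(2)] by (rule notE[rotated])
  qed
  thus ?thesis unfolding avd_def by (rule if_not_P)
qed
lemma bits_exist: "\<exists>q<2^m. \<forall>j<m. bitf q j = v j"
proof (induction m arbitrary: v)
  case 0 show ?case by auto
next
  case (Suc m)
  obtain q where q: "q < 2^m" "\<forall>j<m. bitf q j = v (Suc j)"
    using Suc[of "\<lambda>j. v (Suc j)"] by auto
  define q' where "q' = (if v 0 then 1 else 0) + 2 * q"
  have "q' < 2^Suc m" using q(1) unfolding q'_def by auto
  moreover have "\<forall>j<Suc m. bitf q' j = v j"
  proof (intro allI impI)
    fix j assume j: "j < Suc m"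
    show "bitf q' j = v j"
    proof (cases j)
      case 0 thus ?thesis unfolding q'_def bitf_def by auto
    next
      case (Suc j')
      have "q' div 2^j = (q' div 2) div 2^j'" using Suc by (simp add: div_mult2_eq)
      also have "q' div 2 = q" unfolding q'_def by auto
      finally show ?thesis using q(2) Suc j unfolding bitf_def by auto
    qed
  qed
  ultimately show ?case by blast
qed

lemma card_part:
  fixes m K :: nat and Q :: "nat \<Rightarrow> nat \<Rightarrow> bool"
  assumes "K > 0"
  shows "card {i\<in>{0..<m*K}. Q (i div K) i} = (\<Sum>j<m. card {i\<in>{j*K..<(j+1)*K}. Q j i})"
proof (induction m)
  case 0 show ?case by simp
next
  case (Suc m)
  have seteq: "{i\<in>{0..<Suc m*K}. Q (i div K) i} = {i\<in>{0..<m*K}. Q (i div K) i} \<union> {i\<in>{m*K..<(m+1)*K}. Q m i}"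
  proof (rule set_eqI)
    fix i
    have dv: "i div K = m" if "m*K \<le> i" "i < (m+1)*K"
      using that assms by (simp add: div_nat_eqI mult.commute)
    show "i \<in> {i\<in>{0..<Suc m*K}. Q (i div K) i} \<longleftrightarrow> i \<in> {i\<in>{0..<m*K}. Q (i div K) i} \<union> {i\<in>{m*K..<(m+1)*K}. Q m i}"
    proof (cases "i < m*K")
      case True thus ?thesis by simp
    next
      case False thus ?thesis using dv by auto
    qed
  qed
  have cu: "card ({i\<in>{0..<m*K}. Q (i div K) i} \<union> {i\<in>{m*K..<(m+1)*K}. Q m i}) = card {i\<in>{0..<m*K}. Q (i div K) i} + card {i\<in>{m*K..<(m+1)*K}. Q m i}"
  proof (rule card_Un_disjoint)
    show "finite {i\<in>{0..<m*K}. Q (i div K) i}" by simp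
    show "finite {i\<in>{m*K..<(m+1)*K}. Q m i}" by simp
    show "{i\<in>{0..<m*K}. Q (i div K) i} \<inter> {i\<in>{m*K..<(m+1)*K}. Q m i} = {}"
      by auto
  qed
  show ?case unfolding seteq cu Suc.IH by (simp only: sum.lessThan_Suc)
qed

lemma card_grp_bool:
  "card {i\<in>{a..<b::nat}. r i = c} = (if c then card {i\<in>{a..<b}. r i} else (b - a) - card {i\<in>{a..<b}. r i})"
proof (cases c)
  case True thus ?thesis by simp
next
  case False
  have "card {i\<in>{a..<b}. r i} + card {i\<in>{a..<b}. \<not> r i} = card {a..<b}"
  proof -
    have "{i\<in>{a..<b}. r i} \<union> {i\<in>{a..<b}. \<not> r i} = {a..<b}" by auto
    moreover have "card ({i\<in>{a..<b}. r i} \<union> {i\<in>{a..<b}. \<not> r i}) = card {i\<in>{a..<b}. r i} + card {i\<in>{a..<b}. \<not> r i}"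
      by (rule card_Un_disjoint) auto
    ultimately show ?thesis by simp
  qed
  thus ?thesis using False by simp
qed




definition HH :: "nat \<Rightarrow> bool \<Rightarrow> nat \<Rightarrow> real" where
  "HH K b A = real (max A (K - A)) - real (if b then A else K - A)"

lemma deg_eq: "deg N x a = card {i \<in> N - {a}. a \<in> x i}"
  unfolding deg_def indeg_def by simp

lemma gap_pointwise:
  fixes n m K :: nat and r :: "nat \<Rightarrow> bool"
  assumes K: "K > 0" and mK: "m*K \<le> 2*(n+1)" and pm: "2^m \<le> n+1" and t: "t \<in> {0..<2*(n+1)}"
  shows "real (maxdeg {0..<2*(n+1)} (prof n m K r)) - real (deg {0..<2*(n+1)} (prof n m K r) t) \<ge>
     (\<Sum>j<m. HH K (bitf (t mod (n+1)) j) (card {i\<in>{j*K..<(j+1)*K}. r i})) - 1"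
proof -
  let ?N = "{0..<2*(n+1)}"
  let ?x = "prof n m K r"
  define A where "A j = card {i\<in>{j*K..<(j+1)*K}. r i}" for j
  define v where "v j = (K \<le> 2 * A j)" for j
  define tb where "tb j = bitf (t mod (n+1)) j" for j
  obtain q where q: "q < 2^m" "\<forall>j<m. bitf q j = v j" using bits_exist by blast
  have qN: "q \<in> ?N" using q(1) pm by auto
  have qmod: "q mod (n+1) = q" using q(1) pm by auto
  have divlt: "i div K < m" if "i < m*K" for i
    using that K by (simp add: less_mult_imp_div_less)
  define X where "X = {i\<in>{0..<m*K}. r i = v (i div K)}"
  define Y where "Y = {i\<in>{0..<m*K}. r i = tb (i div K)}"
  have grpK: "(j+1)*K - j*K = K" for j by simp
  have cgrp: "card {i\<in>{j*K..<(j+1)*K}. r i = c} = (if c then A j else K - A j)" for j c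
    using card_grp_bool[of "j*K" "(j+1)*K" r c] unfolding A_def grpK by simp
  have cX: "card X = (\<Sum>j<m. max (A j) (K - A j))"
  proof -
    have "card X = (\<Sum>j<m. card {i\<in>{j*K..<(j+1)*K}. r i = v j})"
      unfolding X_def by (rule card_part[OF K, where Q="\<lambda>j i. r i = v j"])
    also have "\<dots> = (\<Sum>j<m. max (A j) (K - A j))"
      by (rule sum.cong[OF refl], subst cgrp) (auto simp: v_def)
    finally show ?thesis .
  qed
  have cY: "card Y = (\<Sum>j<m. (if tb j then A j else K - A j))"
  proof -
    have "card Y = (\<Sum>j<m. card {i\<in>{j*K..<(j+1)*K}. r i = tb j})"
      unfolding Y_def by (rule card_part[OF K, where Q="\<lambda>j i. r i = tb j"])
    also have "\<dots> = (\<Sum>j<m. (if tb j then A j else K - A j))"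
      by (rule sum.cong[OF refl], subst cgrp) simp
    finally show ?thesis .
  qed
  have sub1: "X - {q} \<subseteq> {i \<in> ?N - {q}. q \<in> ?x i}"
  proof
    fix i assume i: "i \<in> X - {q}"
    hence i1: "i < m*K" "r i = v (i div K)" "i \<noteq> q" unfolding X_def by auto
    have "bitf q (i div K) = r i" using q(2) divlt[OF i1(1)] i1(2) by simp
    thus "i \<in> {i \<in> ?N - {q}. q \<in> ?x i}"
      using i1 mK qN qmod q(1) by (auto simp: mem_prof)
  qed
  have sub2: "{i \<in> ?N - {t}. t \<in> ?x i} \<subseteq> Y"
  proof
    fix i assume "i \<in> {i \<in> ?N - {t}. t \<in> ?x i}"
    thus "i \<in> Y" unfolding Y_def tb_def by (auto simp: mem_prof)
  qed
  have finX: "finite X" unfolding X_def by simp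
  have "card X \<le> card (X - {q}) + 1"
    using finX by (simp add: card_Diff_singleton_if, linarith)
  also have "card (X - {q}) \<le> deg ?N ?x q"
    unfolding deg_eq by (rule card_mono) (use sub1 in auto)
  also have "deg ?N ?x q \<le> maxdeg ?N ?x"
    unfolding maxdeg_def using qN by (intro Max_ge) auto
  finally have lo: "card X \<le> maxdeg ?N ?x + 1" by simp
  have hi: "deg ?N ?x t \<le> card Y"
    unfolding deg_eq by (rule card_mono) (use sub2 Y_def in auto)
  have "(\<Sum>j<m. HH K (tb j) (A j)) = real (card X) - real (card Y)"
    unfolding cX cY HH_def by (simp add: sum_subtractf)
  also have "\<dots> \<le> real (maxdeg ?N ?x) - real (deg ?N ?x t) + 1"
    using lo hi by linarith
  finally show ?thesis unfolding tb_def A_def by simp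
qed




lemma HH_point: "k \<le> K \<Longrightarrow> HH K b k = \<bar>2 * real k - real K\<bar> / 2 + (if b then -1/2 else 1/2) * (2 * real k - real K)"
  unfolding HH_def by (cases b; cases "K \<le> 2*k") (auto simp: max_def of_nat_diff abs_if field_simps)

lemma HH_exp: "measure_pmf.expectation (binomial_pmf K (1/2)) (HH K b) = DD K / 2"
proof -
  let ?c = "(if b then -1/2 else 1/2 :: real)"
  have "measure_pmf.expectation (binomial_pmf K (1/2)) (HH K b) =
        measure_pmf.expectation (binomial_pmf K (1/2)) (\<lambda>k. \<bar>2 * real k - real K\<bar> / 2 + ?c * (2 * real k - real K))"
    by (subst (1 2) expectation_binomial_pmf') (auto intro!: sum.cong simp: HH_point)
  also have "\<dots> = DD K / 2 + ?c * SS K"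
    unfolding DD_def SS_def
    by (subst Bochner_Integration.integral_add) (auto simp del: integral_mult_right_zero)
  finally show ?thesis by (simp add: SS_zero)
qed

lemma DD_lower: "DD (2*M) \<ge> real M / sqrt (4 * real M + 1)"
proof -
  have "pp L \<ge> 1 / sqrt (4 * real M + 1)" if "L < M" for L
  proof -
    have p1: "1 / (4 * real L + 1) \<le> pp L ^ 2"
      using pp_lower[of L] by (simp add: divide_le_eq add.commute)
    have p2: "1 / (4 * real M + 1) \<le> 1 / (4 * real L + 1)"
      using that by (intro divide_left_mono) auto
    have "1 / sqrt (4 * real M + 1) = sqrt (1 / (4 * real M + 1))"
      by (simp add: real_sqrt_divide)
    also have "\<dots> \<le> sqrt (pp L ^ 2)"
      using p1 p2 by (intro real_sqrt_le_mono) linarith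
    also have "\<dots> = pp L" using pp_nonneg[of L] by simp
    finally show ?thesis .
  qed
  hence "(\<Sum>L<M. 1 / sqrt (4 * real M + 1)) \<le> (\<Sum>L<M. pp L)"
    by (intro sum_mono) auto
  also have "\<dots> \<le> DD (2*M)" by (rule DD_sum)
  finally show ?thesis by simp
qed

lemma profile_eq:
  "profile_pmf {0..<2*(n+1)} (\<lambda>i. map_pmf (vote n m K i) (bernoulli_pmf (1/2))) =
   map_pmf (prof n m K) (Pi_pmf {0..<2*(n+1)} False (\<lambda>_. bernoulli_pmf (1/2)))"
proof -
  let ?N = "{0..<2*(n+1)}"
  have "(\<lambda>i. map_pmf (vote n m K i) (bernoulli_pmf (1/2))) =
        (\<lambda>i. bind_pmf (bernoulli_pmf (1/2)) (\<lambda>b. return_pmf (vote n m K i b)))"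
    by (simp add: map_pmf_def)
  hence "profile_pmf ?N (\<lambda>i. map_pmf (vote n m K i) (bernoulli_pmf (1/2))) =
      Pi_pmf ?N {} (\<lambda>i. bind_pmf (bernoulli_pmf (1/2)) (\<lambda>b. return_pmf (vote n m K i b)))"
    unfolding profile_pmf_def by simp
  also have "\<dots> = bind_pmf (Pi_pmf ?N False (\<lambda>_. bernoulli_pmf (1/2)))
       (\<lambda>f. Pi_pmf ?N {} (\<lambda>i. return_pmf (vote n m K i (f i))))"
    by (rule Pi_pmf_bind[where d'=False]) simp
  also have "\<dots> = bind_pmf (Pi_pmf ?N False (\<lambda>_. bernoulli_pmf (1/2)))
       (\<lambda>f. return_pmf (prof n m K f))"
    by (simp add: prof_def)
  also have "\<dots> = map_pmf (prof n m K) (Pi_pmf ?N False (\<lambda>_. bernoulli_pmf (1/2)))"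
    by (simp add: map_pmf_def)
  finally show ?thesis .
qed

lemma A_dist:
  assumes "finite N" "G \<subseteq> N" "card G = K"
  shows "map_pmf (\<lambda>f. card {i\<in>G. f i}) (Pi_pmf N False (\<lambda>_. bernoulli_pmf (1/2))) = binomial_pmf K (1/2)"
proof -
  have fG: "finite G" using assms finite_subset by blast
  have "binomial_pmf K (1/2) = map_pmf (\<lambda>f. card {x\<in>G. f x}) (Pi_pmf G False (\<lambda>_. bernoulli_pmf (1/2)))"
    by (rule binomial_pmf_altdef'[OF fG assms(3)]) auto
  also have "Pi_pmf G False (\<lambda>_. bernoulli_pmf (1/2)) =
     map_pmf (\<lambda>f x. if x \<in> G then f x else False) (Pi_pmf N False (\<lambda>_. bernoulli_pmf (1/2)))"
    by (rule Pi_pmf_subset[OF assms(1,2)])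
  also have "map_pmf (\<lambda>f. card {x\<in>G. f x}) (map_pmf (\<lambda>f x. if x \<in> G then f x else False) (Pi_pmf N False (\<lambda>_. bernoulli_pmf (1/2))))
      = map_pmf (\<lambda>f. card {i\<in>G. f i}) (Pi_pmf N False (\<lambda>_. bernoulli_pmf (1/2)))"
    unfolding pmf.map_comp o_def by (intro pmf.map_cong refl arg_cong[where f=card]) auto
  finally show ?thesis ..
qed




lemma main_bound:
  fixes n m M :: nat
  assumes M: "M > 0" and mK: "m*(2*M) \<le> 2*(n+1)" and pm: "2^m \<le> n+1" and t: "t \<in> {0..<2*(n+1)}"
  shows "avd_additive_approx {0..<2*(n+1)} t (\<lambda>i. map_pmf (vote n m (2*M) i) (bernoulli_pmf (1/2)))
           \<ge> real m * DD (2*M) / 2 - 1"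
proof -
  define K where "K = 2*M"
  have K: "K > 0" using M unfolding K_def by simp
  let ?N = "{0..<2*(n+1)}"
  define Q where "Q = Pi_pmf ?N False (\<lambda>_. bernoulli_pmf (1/2))"
  have finQ: "finite (set_pmf Q)"
  proof -
    have "set_pmf Q \<subseteq> PiE_dflt ?N False (set_pmf \<circ> (\<lambda>_. bernoulli_pmf (1/2)))"
      unfolding Q_def by (rule set_Pi_pmf_subset') simp
    moreover have "finite (PiE_dflt ?N False (set_pmf \<circ> (\<lambda>_. bernoulli_pmf (1/2))))"
      by (rule finite_PiE_dflt) auto
    ultimately show ?thesis by (rule finite_subset)
  qed
  have intQ: "integrable (measure_pmf Q) f" for f :: "(nat \<Rightarrow> bool) \<Rightarrow> real"
    by (rule integrable_measure_pmf_finite[OF finQ])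
  define G where "G j = {j*K..<(j+1)*K}" for j
  define tb where "tb j = bitf (t mod (n+1)) j" for j
  have distj: "map_pmf (\<lambda>f. card {i\<in>G j. f i}) Q = binomial_pmf K (1/2)" if "j < m" for j
  proof (rule A_dist[of ?N, folded Q_def])
    show "finite ?N" by simp
    have "(j+1)*K \<le> m*K" using that by (intro mult_right_mono) auto
    thus "G j \<subseteq> ?N" unfolding G_def using mK K_def by auto
    show "card (G j) = K" unfolding G_def by simp
  qed
  have expj: "measure_pmf.expectation Q (\<lambda>r. HH K (tb j) (card {i\<in>G j. r i})) = DD K / 2"
    if "j < m" for j
  proof -
    have "measure_pmf.expectation Q (\<lambda>r. HH K (tb j) (card {i\<in>G j. r i})) =
          measure_pmf.expectation (map_pmf (\<lambda>f. card {i\<in>G j. f i}) Q) (HH K (tb j))"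
      by simp
    also have "\<dots> = DD K / 2" unfolding distj[OF that] by (rule HH_exp)
    finally show ?thesis .
  qed
  have "avd_additive_approx ?N t (\<lambda>i. map_pmf (vote n m K i) (bernoulli_pmf (1/2))) =
      measure_pmf.expectation Q (\<lambda>r. real (maxdeg ?N (prof n m K r)) - real (deg ?N (prof n m K r) t))"
    unfolding avd_additive_approx_def profile_eq Q_def integral_map_pmf avd_prof[OF t] ..
  also have "\<dots> \<ge> measure_pmf.expectation Q (\<lambda>r. (\<Sum>j<m. HH K (tb j) (card {i\<in>G j. r i})) - 1)"
    unfolding G_def tb_def
    by (intro integral_mono intQ gap_pointwise[OF K _ pm t]) (use mK K_def in simp)
  moreover have "measure_pmf.expectation Q (\<lambda>r. (\<Sum>j<m. HH K (tb j) (card {i\<in>G j. r i})) - 1)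
      = (\<Sum>j<m. measure_pmf.expectation Q (\<lambda>r. HH K (tb j) (card {i\<in>G j. r i}))) - 1"
    by (subst Bochner_Integration.integral_diff) (auto intro: intQ simp: Bochner_Integration.integral_sum[OF intQ])
  moreover have "\<dots> = real m * DD K / 2 - 1"
  proof -
    have "(\<Sum>j<m. measure_pmf.expectation Q (\<lambda>r. HH K (tb j) (card {i\<in>G j. r i}))) = (\<Sum>j<m. DD K / 2)"
      by (rule sum.cong[OF refl]) (simp add: expj)
    thus ?thesis by simp
  qed
  ultimately show ?thesis unfolding K_def by simp
qed




lemma two_m: "2 * m \<le> (2::nat)^m"
proof (induction m)
  case 0 show ?case by simp
next
  case (Suc m)
  have "1 \<le> (2::nat)^m" by simp
  thus ?case using Suc by (cases m) auto
qed

lemma ln_ge4: "real n \<ge> 100 \<Longrightarrow> ln (real n) \<ge> 4"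
proof -
  assume n: "real n \<ge> 100"
  have "exp (4::real) = exp 1 ^ 4" using exp_of_nat_mult[of 4 1] by simp
  also have "\<dots> \<le> 3 ^ 4" by (rule power_mono[OF exp_le]) simp
  finally have "exp (4::real) \<le> real n" using n by simp
  hence "ln (exp 4) \<le> ln (real n)" using n by (subst ln_le_cancel_iff) auto
  thus ?thesis by simp
qed

lemma lin_aux: "(a::real) * 2 / 9 \<le> x \<Longrightarrow> a/9 - 1 \<le> x/2 - 1" by linarith

lemma final_real:
  fixes n m :: nat
  assumes n: "n \<ge> 100" and pm: "2^m \<le> n+1" and pm2: "n+1 < 2^(m+1)"
  shows "(n+1) div m > 0" "m*(2*((n+1) div m)) \<le> 2*(n+1)"
    "real m * (real ((n+1) div m) / sqrt (4*real ((n+1) div m)+1)) / 2 - 1 \<ge> (1/18) * sqrt (real n * ln (real n))"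
proof -
  define M where "M = (n+1) div m"
  have m1: "m \<ge> 1"
  proof (rule ccontr)
    assume "\<not> m \<ge> 1" hence "m = 0" by simp
    thus False using pm2 n by simp
  qed
  have m2: "2*m \<le> n+1" using two_m[of m] pm by linarith
  have "2 * m div m \<le> (n+1) div m" using m2 by (rule div_le_mono)
  hence M2: "M \<ge> 2" using m1 unfolding M_def by simp
  thus "(n+1) div m > 0" unfolding M_def by simp
  have mM: "m * M \<le> n+1" unfolding M_def by (simp add: mult.commute)
  have "2*(m*M) \<le> 2*(n+1)" using mM by simp
  hence "m*(2*M) \<le> 2*(n+1)" by (simp add: mult.left_commute)
  thus "m*(2*((n+1) div m)) \<le> 2*(n+1)" unfolding M_def .
  have dm: "n+1 = m * M + (n+1) mod m" unfolding M_def by simp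
  have "(n+1) mod m < m" using m1 by simp
  hence mM2: "2*(m*M) \<ge> n" using dm m2 by linarith
  hence rmM: "real m * real M \<ge> real n / 2"
    by (metis (mono_tags, lifting) of_nat_le_iff of_nat_mult of_nat_numeral divide_le_eq mult.commute zero_less_numeral of_nat_mult)
  have lnn: "ln (real n) \<ge> 4" using ln_ge4[of n] n by simp
  have "ln (real (n+1)) < real m + 1"
  proof -
    have "ln (real (n+1)) < ln (real (2^(m+1)))"
      using pm2 by (subst ln_less_cancel_iff) (auto simp del: of_nat_power)
    also have "\<dots> = real (m+1) * ln 2" by (simp only: of_nat_power of_nat_numeral ln_realpow)
    also have "\<dots> < real (m+1) * 1" using ln_2_less_1 by (intro mult_strict_left_mono) auto
    finally show ?thesis by simp
  qed
  moreover have "ln (real n) \<le> ln (real (n+1))" using n by (subst ln_le_cancel_iff) auto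
  ultimately have mln: "real m \<ge> ln (real n) / 2" using lnn by linarith
  have Mpos: "real M > 0" using M2 by simp
  have s1: "sqrt (4 * real M + 1) \<le> sqrt 5 * sqrt (real M)"
  proof -
    have "4 * real M + 1 \<le> 5 * real M" using M2 by simp
    hence "sqrt (4 * real M + 1) \<le> sqrt (5 * real M)" by (rule real_sqrt_le_mono)
    thus ?thesis by (simp add: real_sqrt_mult)
  qed
  have s2: "real M / sqrt (4 * real M + 1) \<ge> sqrt (real M) / sqrt 5"
  proof -
    have pos: "sqrt (4 * real M + 1) > 0" by simp
    have "real M / (sqrt 5 * sqrt (real M)) = sqrt (real M) / sqrt 5"
      using Mpos by (simp add: field_simps)
    moreover have "real M / sqrt (4 * real M + 1) \<ge> real M / (sqrt 5 * sqrt (real M))"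
      using s1 pos Mpos by (intro divide_left_mono) auto
    ultimately show ?thesis by simp
  qed
  have s3: "real m * sqrt (real M) \<ge> sqrt (real n * ln (real n)) / 2"
  proof -
    have "real m * sqrt (real M) = sqrt (real m * (real m * real M))"
      by (simp add: real_sqrt_mult)
    also have "real m * (real m * real M) \<ge> (ln (real n) / 2) * (real n / 2)"
      using mln rmM lnn by (intro mult_mono) auto
    hence "sqrt (real m * (real m * real M)) \<ge> sqrt ((ln (real n) / 2) * (real n / 2))"
      by (rule real_sqrt_le_mono)
    also have "sqrt ((ln (real n) / 2) * (real n / 2)) = sqrt (real n * ln (real n)) / 2"
      by (simp add: real_sqrt_divide real_sqrt_mult mult.commute)
    finally show ?thesis by simp
  qed
  define S where "S = sqrt (real n * ln (real n))"
  have S18: "S \<ge> 18"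
  proof -
    have "real n * ln (real n) \<ge> 100 * 4" using n lnn by (intro mult_mono) auto
    hence "sqrt (real n * ln (real n)) \<ge> sqrt 324" by (intro real_sqrt_le_mono) simp
    moreover have "sqrt (324::real) = 18" by (simp add: real_sqrt_eq_iff power2_eq_square[symmetric]) 
    ultimately show ?thesis unfolding S_def by simp
  qed
  have sq5: "sqrt 5 \<le> (9/4::real)"
  proof -
    have "sqrt 5 \<le> sqrt ((9/4::real)^2)" by (rule real_sqrt_le_mono) (simp add: power2_eq_square)
    thus ?thesis by simp
  qed
  have "real m * (real M / sqrt (4*real M+1)) \<ge> real m * (sqrt (real M) / sqrt 5)"
    using s2 by (intro mult_left_mono) auto
  also have "real m * (sqrt (real M) / sqrt 5) = (real m * sqrt (real M)) / sqrt 5" by simp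
  also have "\<dots> \<ge> (S / 2) / sqrt 5" using s3 unfolding S_def by (intro divide_right_mono) auto
  also have "(S / 2) / sqrt 5 \<ge> (S/2) / (9/4)"
    using sq5 S18 by (intro divide_left_mono) auto
  finally have "real m * (real M / sqrt (4*real M+1)) \<ge> S * 2 / 9" by simp
  hence "real m * (real M / sqrt (4*real M+1)) / 2 - 1 \<ge> S / 9 - 1" by (rule lin_aux)
  moreover have "S / 9 - 1 \<ge> (1/18) * S" using S18 by simp
  ultimately show "real m * (real ((n+1) div m) / sqrt (4*real ((n+1) div m)+1)) / 2 - 1 \<ge> (1/18) * sqrt (real n * ln (real n))"
    unfolding S_def M_def by linarith
qed




theorem mainTheorem18:
  shows "\<exists>c>0. \<exists>n0::nat. \<forall>n\<ge>n0.
           \<exists>P. opinion_poll {0..<2*(n+1)} P \<and>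
             (\<forall>t\<in>{0..<2*(n+1)}.
                avd_additive_approx {0..<2*(n+1)} t P \<ge> c * sqrt (real n * ln (real n)))"
proof (intro exI[of _ "1/18"] conjI exI[of _ "100::nat"] allI impI)
  show "(0::real) < 1/18" by simp
  fix n :: nat assume n: "100 \<le> n"
  obtain m where pm: "2^m \<le> n+1" and pm2: "n+1 < 2^(m+1)"
    using ex_power_ivl1[of 2 "n+1"] by auto
  define M where "M = (n+1) div m"
  note fr = final_real[OF n pm pm2, folded M_def]
  define P where "P = (\<lambda>i. map_pmf (vote n m (2*M) i) (bernoulli_pmf (1/2)))"
  have op: "opinion_poll {0..<2*(n+1)} P"
    unfolding opinion_poll_def P_def by (auto simp: vote_def)
  have "\<forall>t\<in>{0..<2*(n+1)}. avd_additive_approx {0..<2*(n+1)} t P \<ge> 1/18 * sqrt (real n * ln (real n))"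
  proof
    fix t assume t: "t \<in> {0..<2*(n+1)}"
    have "avd_additive_approx {0..<2*(n+1)} t P \<ge> real m * DD (2*M) / 2 - 1"
      unfolding P_def by (rule main_bound[OF fr(1) fr(2) pm t])
    moreover have "real m * DD (2*M) / 2 \<ge> real m * (real M / sqrt (4 * real M + 1)) / 2"
      using DD_lower[of M] by (intro divide_right_mono mult_left_mono) auto
    ultimately show "avd_additive_approx {0..<2*(n+1)} t P \<ge> 1/18 * sqrt (real n * ln (real n))"
      using fr(3) by linarith
  qed
  thus "\<exists>P. opinion_poll {0..<2*(n+1)} P \<and>
             (\<forall>t\<in>{0..<2*(n+1)}. avd_additive_approx {0..<2*(n+1)} t P \<ge> 1/18 * sqrt (real n * ln (real n)))"
    using op by blast
qed


end
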